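(* Let $\mathcal{M}$ be a monotone gridding matrix such that the cell graph $G_\mathcal{M}$ contains a path on $k$ vertices. Then there exists a permutation $\pi\in\mathrm{Grid}(\mathcal{M})$ whose grid-width is at least $k/4$.
   Context: $\mathrm{Inc}$ and $\mathrm{Dec}$ denote the classes of increasing and decreasing permutations. A monotone gridding matrix $\mathcal{M}$ is a $k'\times\ell'$ matrix with entries in $\{\mathrm{Inc},\mathrm{Dec},\emptyset\}$ (columns left to right, rows bottom to top). An $\mathcal{M}$-gridding of a permutation $\pi$ of length $n$ (identified with its diagram $\{(i,\pi_i)\}$) consists of possibly empty disjoint integer intervals $I_1<\dots<I_{k'}$ and $J_1<\dots<J_{\ell'}$, each family with union $[n]$, such that the points in each cell $I_i\times J_j$ form a pattern in $\mathcal{M}_{i,j}$; $\mathrm{Grid}(\mathcal{M})$ is the class of permutations with an $\mathcal{M}$-gridding. The cell graph $G_\mathcal{M}$ has as vertices the cells with infinite entries, adjacent when they share a row or column and all cells strictly between them are finite or empty. The intervalicity of $A\subseteq[n]$ is the least number of disjoint integer intervals with union $A$; the grid-complexity of a point set is the maximum of the intervalicities of its two axis projections. A grid tree of $\pi$ is a rooted binary tree whose leaves are labeled bijectively by the points of $\pi$; its grid-width is the maximum over vertices $v$ of the grid-complexity of the leaf labels below $v$; the grid-width of $\pi$ is the minimum grid-width of a grid tree of $\pi$. *)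

theory Defs
  imports Complex_Main
begin

datatype cellclass = Inc | Dec | Emp

definition is_int :: "nat set \<Rightarrow> bool" where
  "is_int A \<equiv> \<exists>a b. A = {a..b}"

definition is_perm :: "nat \<Rightarrow> (nat \<Rightarrow> nat) \<Rightarrow> bool" where
  "is_perm n \<sigma> \<equiv> bij_betw \<sigma> {1..n} {1..n}"

definition diagram :: "nat \<Rightarrow> (nat \<Rightarrow> nat) \<Rightarrow> (nat \<times> nat) set" where
  "diagram n \<sigma> = (\<lambda>i. (i, \<sigma> i)) ` {1..n}"

definition interval_partition :: "nat \<Rightarrow> nat \<Rightarrow> (nat \<Rightarrow> nat set) \<Rightarrow> bool" where
  "interval_partition n m I \<equiv>
     (\<forall>i<m. is_int (I i)) \<and>
     (\<forall>i j. i < j \<and> j < m \<longrightarrow> (\<forall>x\<in>I i. \<forall>y\<in>I j. x < y)) \<and>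
     (\<Union>i<m. I i) = {1..n}"

definition cell_ok :: "cellclass \<Rightarrow> (nat \<times> nat) set \<Rightarrow> bool" where
  "cell_ok c P \<equiv> (case c of
      Inc \<Rightarrow> (\<forall>p\<in>P. \<forall>q\<in>P. fst p < fst q \<longrightarrow> snd p < snd q)
    | Dec \<Rightarrow> (\<forall>p\<in>P. \<forall>q\<in>P. fst p < fst q \<longrightarrow> snd p > snd q)
    | Emp \<Rightarrow> P = {})"

text \<open>M is a kc x lr matrix (columns i < kc, rows j < lr), entry M i j.\<close>
definition gridding ::
  "(nat \<Rightarrow> nat \<Rightarrow> cellclass) \<Rightarrow> nat \<Rightarrow> nat \<Rightarrow> nat \<Rightarrow> (nat \<Rightarrow> nat)
     \<Rightarrow> (nat \<Rightarrow> nat set) \<Rightarrow> (nat \<Rightarrow> nat set) \<Rightarrow> bool" where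
  "gridding M kc lr n \<sigma> I J \<equiv>
     interval_partition n kc I \<and> interval_partition n lr J \<and>
     (\<forall>i<kc. \<forall>j<lr. cell_ok (M i j) (diagram n \<sigma> \<inter> (I i \<times> J j)))"

definition Grid :: "(nat \<Rightarrow> nat \<Rightarrow> cellclass) \<Rightarrow> nat \<Rightarrow> nat \<Rightarrow> (nat \<times> (nat \<Rightarrow> nat)) set" where
  "Grid M kc lr = {(n, \<sigma>). is_perm n \<sigma> \<and> (\<exists>I J. gridding M kc lr n \<sigma> I J)}"

definition cg_vertex :: "(nat \<Rightarrow> nat \<Rightarrow> cellclass) \<Rightarrow> nat \<Rightarrow> nat \<Rightarrow> nat \<times> nat \<Rightarrow> bool" where
  "cg_vertex M kc lr v \<equiv> fst v < kc \<and> snd v < lr \<and> M (fst v) (snd v) \<noteq> Emp"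

definition cg_adj :: "(nat \<Rightarrow> nat \<Rightarrow> cellclass) \<Rightarrow> nat \<Rightarrow> nat \<Rightarrow> nat \<times> nat \<Rightarrow> nat \<times> nat \<Rightarrow> bool" where
  "cg_adj M kc lr v w \<equiv> cg_vertex M kc lr v \<and> cg_vertex M kc lr w \<and> v \<noteq> w \<and>
     ((fst v = fst w \<and> (\<forall>t. min (snd v) (snd w) < t \<and> t < max (snd v) (snd w) \<longrightarrow> M (fst v) t = Emp)) \<or>
      (snd v = snd w \<and> (\<forall>t. min (fst v) (fst w) < t \<and> t < max (fst v) (fst w) \<longrightarrow> M t (snd v) = Emp)))"

definition has_path :: "(nat \<Rightarrow> nat \<Rightarrow> cellclass) \<Rightarrow> nat \<Rightarrow> nat \<Rightarrow> nat \<Rightarrow> bool" where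
  "has_path M kc lr k \<equiv> \<exists>vs. length vs = k \<and> distinct vs \<and>
     (\<forall>v\<in>set vs. cg_vertex M kc lr v) \<and>
     (\<forall>t. Suc t < k \<longrightarrow> cg_adj M kc lr (vs ! t) (vs ! Suc t))"

definition intervalicity :: "nat set \<Rightarrow> nat" where
  "intervalicity A = (LEAST m. \<exists>f. (\<forall>i<m. is_int (f i)) \<and>
      (\<forall>i j. i < m \<and> j < m \<and> i \<noteq> j \<longrightarrow> f i \<inter> f j = {}) \<and> (\<Union>i<m. f i) = A)"

definition grid_complexity :: "(nat \<times> nat) set \<Rightarrow> nat" where
  "grid_complexity P = max (intervalicity (fst ` P)) (intervalicity (snd ` P))"

datatype gtree = Leaf "nat \<times> nat" | Node gtree gtree

fun leaves :: "gtree \<Rightarrow> (nat \<times> nat) list" where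
  "leaves (Leaf p) = [p]"
| "leaves (Node l r) = leaves l @ leaves r"

fun below_sets :: "gtree \<Rightarrow> (nat \<times> nat) set set" where
  "below_sets (Leaf p) = {{p}}"
| "below_sets (Node l r) = insert (set (leaves (Node l r))) (below_sets l \<union> below_sets r)"

definition is_grid_tree :: "nat \<Rightarrow> (nat \<Rightarrow> nat) \<Rightarrow> gtree \<Rightarrow> bool" where
  "is_grid_tree n \<sigma> T \<equiv> distinct (leaves T) \<and> set (leaves T) = diagram n \<sigma>"

definition tree_grid_width :: "gtree \<Rightarrow> nat" where
  "tree_grid_width T = Max (grid_complexity ` below_sets T)"

definition grid_width :: "nat \<Rightarrow> (nat \<Rightarrow> nat) \<Rightarrow> nat" where
  "grid_width n \<sigma> = Inf {tree_grid_width T | T. is_grid_tree n \<sigma> T}"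

end

theory Submission
  imports Defs "HOL-Library.Product_Lexorder"
begin


definition rk :: "('p \<Rightarrow> 'k::linorder) \<Rightarrow> 'p set \<Rightarrow> 'p \<Rightarrow> nat" where
  "rk key P p = Suc (card {q\<in>P. key q < key p})"

lemma rk_less_iff:
  assumes fin: "finite P" and inj: "inj_on key P" and p: "p\<in>P" and q: "q\<in>P"
  shows "rk key P p < rk key P q \<longleftrightarrow> key p < key q"
proof
  assume "key p < key q"
  then have "{r\<in>P. key r < key p} \<subset> {r\<in>P. key r < key q}" using p by auto
  then show "rk key P p < rk key P q" unfolding rk_def
    using fin by (simp add: psubset_card_mono)
next
  assume a: "rk key P p < rk key P q"
  show "key p < key q"
  proof (rule ccontr)
    assume "\<not> key p < key q"
    then have "key q < key p \<or> key q = key p" by auto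
    then show False
    proof
      assume "key q < key p"
      then have "{r\<in>P. key r < key q} \<subset> {r\<in>P. key r < key p}" using q by auto
      then have "rk key P q < rk key P p" unfolding rk_def
        using fin by (simp add: psubset_card_mono)
      then show False using a by simp
    next
      assume "key q = key p"
      then have "q = p" using inj p q by (meson inj_onD)
      then show False using a by simp
    qed
  qed
qed

lemma rk_inj:
  assumes fin: "finite P" and inj: "inj_on key P"
  shows "inj_on (rk key P) P"
proof (rule inj_onI)
  fix p q assume p: "p\<in>P" and q: "q\<in>P" and e: "rk key P p = rk key P q"
  show "p = q"
  proof (rule ccontr)
    assume "p \<noteq> q"
    then have "key p \<noteq> key q" using inj p q by (meson inj_onD)
    then have "key p < key q \<or> key q < key p" by auto
    then show False using rk_less_iff[OF fin inj p q] rk_less_iff[OF fin inj q p] e by auto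
  qed
qed

lemma rk_range:
  assumes fin: "finite P" and p: "p\<in>P"
  shows "rk key P p \<in> {1..card P}"
proof -
  have "{q\<in>P. key q < key p} \<subset> P" using p by auto
  then have "card {q\<in>P. key q < key p} < card P" using fin by (simp add: psubset_card_mono)
  then show ?thesis unfolding rk_def by simp
qed

lemma rk_bij:
  assumes fin: "finite P" and inj: "inj_on key P"
  shows "bij_betw (rk key P) P {1..card P}"
proof -
  have i: "inj_on (rk key P) P" by (rule rk_inj[OF fin inj])
  have s: "rk key P ` P \<subseteq> {1..card P}" using rk_range[OF fin] by blast
  have "card (rk key P ` P) = card {1..card P}" using card_image[OF i] by simp
  then have "rk key P ` P = {1..card P}" using s by (simp add: card_subset_eq)
  then show ?thesis using i by (simp add: bij_betw_def)
qed

lemma rk_succ: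
  assumes fin: "finite P" and inj: "inj_on key P" and p: "p\<in>P" and q: "q\<in>P"
    and lt: "key p < key q" and nb: "\<forall>r\<in>P. \<not> (key p < key r \<and> key r < key q)"
  shows "rk key P q = Suc (rk key P p)"
proof -
  have "{r\<in>P. key r < key q} = insert p {r\<in>P. key r < key p}"
  proof
    show "{r\<in>P. key r < key q} \<subseteq> insert p {r\<in>P. key r < key p}"
    proof
      fix r assume r: "r \<in> {r\<in>P. key r < key q}"
      then have "key r < key p \<or> key r = key p" using nb by force
      then show "r \<in> insert p {r\<in>P. key r < key p}"
        using r inj p by (auto dest: inj_onD)
    qed
    show "insert p {r\<in>P. key r < key p} \<subseteq> {r\<in>P. key r < key q}"
      using p lt by auto
  qed
  then show ?thesis unfolding rk_def using fin by simp
qed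

lemma rk_prefix:
  fixes g :: "'p \<Rightarrow> 'g::linorder"
  assumes fin: "finite P" and inj: "inj_on key P" and p: "p\<in>P"
    and mono: "\<forall>p\<in>P. \<forall>q\<in>P. key p < key q \<longrightarrow> g p \<le> g q"
  shows "card {q\<in>P. g q < g p} < rk key P p \<and> rk key P p \<le> card {q\<in>P. g q \<le> g p}"
proof
  have "{q\<in>P. g q < g p} \<subseteq> {q\<in>P. key q < key p}"
  proof
    fix q assume q: "q \<in> {q\<in>P. g q < g p}"
    show "q \<in> {q\<in>P. key q < key p}"
    proof (rule ccontr)
      assume "q \<notin> {q\<in>P. key q < key p}"
      then have "key p < key q \<or> key p = key q" using q by auto
      then show False
      proof
        assume "key p < key q" then have "g p \<le> g q" using mono p q by auto
        then show False using q by auto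
      next
        assume "key p = key q" then have "p = q" using inj p q by (auto dest: inj_onD)
        then show False using q by auto
      qed
    qed
  qed
  then have "card {q\<in>P. g q < g p} \<le> card {q\<in>P. key q < key p}"
    using fin by (intro card_mono) auto
  then show "card {q\<in>P. g q < g p} < rk key P p" unfolding rk_def by simp
next
  have "insert p {q\<in>P. key q < key p} \<subseteq> {q\<in>P. g q \<le> g p}"
    using mono p by auto
  then have "card (insert p {q\<in>P. key q < key p}) \<le> card {q\<in>P. g q \<le> g p}"
    using fin by (intro card_mono) auto
  then show "rk key P p \<le> card {q\<in>P. g q \<le> g p}" unfolding rk_def using fin by simp
qed

lemma rk_prefix_less:
  fixes g :: "'p \<Rightarrow> 'g::linorder"
  assumes fin: "finite P" and inj: "inj_on key P" and p: "p\<in>P" and q: "q\<in>P"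
    and mono: "\<forall>p\<in>P. \<forall>q\<in>P. key p < key q \<longrightarrow> g p \<le> g q"
    and lt: "g p < g q"
  shows "rk key P p < rk key P q"
proof -
  have "card {r\<in>P. g r \<le> g p} \<le> card {r\<in>P. g r < g q}"
    using fin lt by (intro card_mono) auto
  then show ?thesis using rk_prefix[OF fin inj p mono] rk_prefix[OF fin inj q mono] by linarith
qed

lemma rk_contig:
  fixes g :: "'p \<Rightarrow> 'g::linorder"
  assumes fin: "finite P" and inj: "inj_on key P" and p: "p\<in>P" and q: "q\<in>P" and r: "r\<in>P"
    and mono: "\<forall>p\<in>P. \<forall>q\<in>P. key p < key q \<longrightarrow> g p \<le> g q"
    and e: "g p = g q" and a1: "rk key P p \<le> rk key P r" and a2: "rk key P r \<le> rk key P q"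
  shows "g r = g p"
proof (rule ccontr)
  assume "g r \<noteq> g p"
  then have "g r < g p \<or> g q < g r" using e by auto
  then show False
    using rk_prefix_less[OF fin inj r p mono] rk_prefix_less[OF fin inj q r mono] a1 a2 by auto
qed

lemma rk_in_block:
  fixes g :: "'p \<Rightarrow> 'g::linorder"
  assumes fin: "finite P" and inj: "inj_on key P" and p: "p\<in>P"
    and mono: "\<forall>p\<in>P. \<forall>q\<in>P. key p < key q \<longrightarrow> g p \<le> g q"
    and i: "rk key P p \<in> {Suc (card {q\<in>P. g q < c}) .. card {q\<in>P. g q \<le> c}}"
  shows "g p = c"
proof (rule ccontr)
  assume "g p \<noteq> c"
  then have "g p < c \<or> c < g p" by auto
  then show False
  proof
    assume "g p < c"
    then have "card {q\<in>P. g q \<le> g p} \<le> card {q\<in>P. g q < c}" using fin by (intro card_mono) auto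
    then show False using rk_prefix[OF fin inj p mono] i by auto
  next
    assume "c < g p"
    then have "card {q\<in>P. g q \<le> c} \<le> card {q\<in>P. g q < g p}" using fin by (intro card_mono) auto
    then show False using rk_prefix[OF fin inj p mono] i by auto
  qed
qed

lemma ivt_bool:
  fixes f :: "nat \<Rightarrow> bool"
  assumes "a \<le> b" "f a \<noteq> f b"
  shows "\<exists>i. a \<le> i \<and> i < b \<and> f i \<noteq> f (Suc i)"
  using assms
proof (induction b)
  case 0 then show ?case by simp
next
  case (Suc b)
  show ?case
  proof (cases "a = Suc b")
    case True then show ?thesis using Suc by simp
  next
    case False
    then have ab: "a \<le> b" using Suc by simp
    show ?thesis
    proof (cases "f a = f b")
      case True then show ?thesis using Suc ab by (intro exI[of _ b]) auto
    next
      case False then show ?thesis using Suc.IH ab by (metis less_Suc_eq)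
    qed
  qed
qed

section \<open>Intervalicity\<close>

lemma intervalicity_ex:
  assumes "finite A"
  shows "\<exists>f. (\<forall>i<card A. is_int (f i)) \<and>
      (\<forall>i j. i < card A \<and> j < card A \<and> i \<noteq> j \<longrightarrow> f i \<inter> f j = {}) \<and> (\<Union>i<card A. f i) = A"
proof -
  obtain h where h: "bij_betw h {0..<card A} A" using ex_bij_betw_nat_finite[OF assms] by blast
  have hi: "inj_on h {..<card A}" and hA: "h ` {..<card A} = A"
    using h unfolding bij_betw_def lessThan_atLeast0 by auto
  define f where "f i = {h i..h i}" for i
  have c1: "(\<forall>i<card A. is_int (f i))" unfolding f_def is_int_def by blast
  have c2: "\<forall>i j. i < card A \<and> j < card A \<and> i \<noteq> j \<longrightarrow> f i \<inter> f j = {}"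
  proof (intro allI impI)
    fix i j assume a: "i < card A \<and> j < card A \<and> i \<noteq> j"
    then have "h i \<noteq> h j" using hi unfolding inj_on_def by blast
    then show "f i \<inter> f j = {}" unfolding f_def by simp
  qed
  have "(\<Union>i<card A. f i) = h ` {..<card A}" unfolding f_def by auto
  then have c3: "(\<Union>i<card A. f i) = A" using hA by simp
  show ?thesis using c1 c2 c3 by blast
qed

lemma bd_le:
  assumes fin: "finite X"
  shows "card {i. (i \<in> X) \<noteq> (Suc i \<in> X)} \<le> 2 * intervalicity X"
proof -
  let ?Q = "\<lambda>m. \<exists>f. (\<forall>i<m. is_int (f i)) \<and>
      (\<forall>i j. i < m \<and> j < m \<and> i \<noteq> j \<longrightarrow> f i \<inter> f j = {}) \<and> (\<Union>i<m. f i) = X"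
  have "?Q (card X)" using intervalicity_ex[OF fin] by blast
  then have "?Q (intervalicity X)" unfolding intervalicity_def by (rule LeastI)
  then obtain f where fi: "\<forall>i<intervalicity X. is_int (f i)"
    and fu: "(\<Union>i<intervalicity X. f i) = X" by blast
  define m where "m = intervalicity X"
  have fi': "\<And>l. l < m \<Longrightarrow> \<exists>a b. f l = {a..b}" using fi unfolding m_def is_int_def by blast
  have fs: "\<And>l. l < m \<Longrightarrow> f l \<subseteq> X" using fu unfolding m_def by blast
  have fx: "\<And>x. x \<in> X \<Longrightarrow> \<exists>l<m. x \<in> f l" using fu unfolding m_def by blast
  have B1: "{i. i \<in> X \<and> Suc i \<notin> X} \<subseteq> (\<lambda>l. Max (f l)) ` {..<m}"
  proof
    fix i assume i: "i \<in> {i. i \<in> X \<and> Suc i \<notin> X}"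
    then obtain l where l: "l < m" "i \<in> f l" using fx by blast
    obtain a b where ab: "f l = {a..b}" using fi' l(1) by blast
    have "Suc i \<notin> f l" using fs[OF l(1)] i by blast
    then have ib: "i = b" using l(2) unfolding ab by simp
    have "Max {a..b} = b" using l(2) unfolding ab by (intro Max_eqI) auto
    then have "Max (f l) = i" using ab ib by simp
    then show "i \<in> (\<lambda>l. Max (f l)) ` {..<m}" using l(1) by (intro image_eqI[of _ _ l]) auto
  qed
  have B2: "{i. i \<notin> X \<and> Suc i \<in> X} \<subseteq> (\<lambda>l. Min (f l) - 1) ` {..<m}"
  proof
    fix i assume i: "i \<in> {i. i \<notin> X \<and> Suc i \<in> X}"
    then obtain l where l: "l < m" "Suc i \<in> f l" using fx by blast
    obtain a b where ab: "f l = {a..b}" using fi' l(1) by blast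
    have "i \<notin> f l" using fs[OF l(1)] i by blast
    then have ia: "Suc i = a" using l(2) unfolding ab by simp
    have "Min {a..b} = a" using l(2) unfolding ab by (intro Min_eqI) auto
    then have "Min (f l) - 1 = i" using ab ia by simp
    then show "i \<in> (\<lambda>l. Min (f l) - 1) ` {..<m}" using l(1) by (intro image_eqI[of _ _ l]) auto
  qed
  have c1: "card {i. i \<in> X \<and> Suc i \<notin> X} \<le> m"
  proof -
    have "card {i. i \<in> X \<and> Suc i \<notin> X} \<le> card ((\<lambda>l. Max (f l)) ` {..<m})"
      by (rule card_mono[OF _ B1]) simp
    also have "\<dots> \<le> m" using card_image_le[of "{..<m}" "\<lambda>l. Max (f l)"] by simp
    finally show ?thesis .
  qed
  have c2: "card {i. i \<notin> X \<and> Suc i \<in> X} \<le> m"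
  proof -
    have "card {i. i \<notin> X \<and> Suc i \<in> X} \<le> card ((\<lambda>l. Min (f l) - 1) ` {..<m})"
      by (rule card_mono[OF _ B2]) simp
    also have "\<dots> \<le> m" using card_image_le[of "{..<m}" "\<lambda>l. Min (f l) - 1"] by simp
    finally show ?thesis .
  qed
  have eq: "{i. (i \<in> X) \<noteq> (Suc i \<in> X)} = {i. i \<in> X \<and> Suc i \<notin> X} \<union> {i. i \<notin> X \<and> Suc i \<in> X}"
    by auto
  have "card {i. (i \<in> X) \<noteq> (Suc i \<in> X)} \<le> card {i. i \<in> X \<and> Suc i \<notin> X} + card {i. i \<notin> X \<and> Suc i \<in> X}"
    unfolding eq by (rule card_Un_le)
  also have "\<dots> \<le> m + m" using c1 c2 by (rule add_mono)
  finally show ?thesis unfolding m_def by simp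
qed


section \<open>Trees\<close>

lemma leaves_below: "set (leaves T) \<in> below_sets T"
  by (cases T) auto

lemma below_fin: "finite (below_sets T)"
  by (induction T) auto

lemma below_sub: "S \<in> below_sets T \<Longrightarrow> S \<subseteq> set (leaves T)"
  by (induction T) auto

lemma sep:
  assumes "distinct (leaves T)" "2 * N < 3 * length (leaves T)" "2 \<le> N"
  shows "\<exists>S\<in>below_sets T. N \<le> 3 * card S \<and> 3 * card S \<le> 2 * N"
  using assms
proof (induction T)
  case (Leaf p) then show ?case by simp
next
  case (Node l r)
  have dl: "distinct (leaves l)" and dr: "distinct (leaves r)" using Node.prems by auto
  show ?case
  proof (cases "length (leaves r) \<le> length (leaves l)")
    case True
    have big: "N \<le> 3 * length (leaves l)" using Node.prems True by simp
    show ?thesis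
    proof (cases "3 * length (leaves l) \<le> 2 * N")
      case True
      then show ?thesis using big leaves_below[of l] distinct_card[OF dl]
        by (intro bexI[of _ "set (leaves l)"]) auto
    next
      case False
      then obtain S where "S\<in>below_sets l" "N \<le> 3 * card S \<and> 3 * card S \<le> 2 * N"
        using Node.IH(1)[OF dl] Node.prems by auto
      then show ?thesis by auto
    qed
  next
    case False
    have big: "N \<le> 3 * length (leaves r)" using Node.prems False by simp
    show ?thesis
    proof (cases "3 * length (leaves r) \<le> 2 * N")
      case True
      then show ?thesis using big leaves_below[of r] distinct_card[OF dr]
        by (intro bexI[of _ "set (leaves r)"]) auto
    next
      case False
      then obtain S where "S\<in>below_sets r" "N \<le> 3 * card S \<and> 3 * card S \<le> 2 * N"
        using Node.IH(2)[OF dr] Node.prems by auto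
      then show ?thesis by auto
    qed
  qed
qed

fun mk :: "(nat \<times> nat) list \<Rightarrow> gtree" where
  "mk [] = Leaf (0,0)"
| "mk [p] = Leaf p"
| "mk (p # q # r) = Node (Leaf p) (mk (q # r))"

lemma mk_leaves: "xs \<noteq> [] \<Longrightarrow> leaves (mk xs) = xs"
  by (induction xs rule: mk.induct) auto




fun uxf :: "(nat \<Rightarrow> bool) \<Rightarrow> nat \<Rightarrow> nat" where
  "uxf V 0 = 0" | "uxf V (Suc t) = (if V t then uxf V t else Suc t)"
fun uyf :: "(nat \<Rightarrow> bool) \<Rightarrow> nat \<Rightarrow> nat" where
  "uyf V 0 = 0" | "uyf V (Suc t) = (if V t then Suc t else uyf V t)"
fun dxf :: "(nat \<Rightarrow> bool) \<Rightarrow> (nat \<Rightarrow> bool) \<Rightarrow> nat \<Rightarrow> bool" where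
  "dxf V F 0 = False"
| "dxf V F (Suc t) = (if V t then dxf V F t else ((dxf V F t \<noteq> F t) \<noteq> F (Suc t)))"

definition lam :: "nat \<Rightarrow> bool \<Rightarrow> nat \<Rightarrow> nat" where
  "lam m d h = (if d then m - 1 - h else h)"

lemma lam_lt: "h < m \<Longrightarrow> lam m d h < m" unfolding lam_def by auto
lemma lam_less: "h < m \<Longrightarrow> h' < m \<Longrightarrow> (lam m d h < lam m d h') = (if d then h' < h else h < h')"
  unfolding lam_def by auto
lemma lam_inj: "h < m \<Longrightarrow> h' < m \<Longrightarrow> lam m d h = lam m d h' \<Longrightarrow> h = h'"
  unfolding lam_def by (auto split: if_splits)

lemma ux_or_uy: "uxf V t = t \<or> uyf V t = t"
  by (cases t) auto

lemma ux_le: "uxf V t \<le> t" by (induction t) auto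
lemma uy_le: "uyf V t \<le> t" by (induction t) auto

lemma between4:
  fixes a b c d :: nat
  shows "(a,b,c,d) < x \<Longrightarrow> x < (a,b,c,Suc d) \<Longrightarrow> False"
  by (cases x) (auto simp: less_prod_def)

lemma prefix2:
  fixes a b :: nat and r r' :: "'a::linorder"
  shows "(a,b,r) < (a',b',r') \<Longrightarrow> (a,b) \<le> (a',b')"
  by (auto simp: less_prod_def)

lemma prefix1:
  fixes a :: nat and r r' :: "'a::linorder"
  shows "(a,r) < (a',r') \<Longrightarrow> a \<le> a'"
  by (auto simp: less_prod_def)

locale pathctx =
  fixes M :: "nat \<Rightarrow> nat \<Rightarrow> cellclass" and kc lr k :: nat and vs :: "(nat \<times> nat) list"
  assumes len: "length vs = k" and dist: "distinct vs"
    and verts: "\<forall>v\<in>set vs. cg_vertex M kc lr v"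
    and adj: "\<forall>t. Suc t < k \<longrightarrow> cg_adj M kc lr (vs!t) (vs!Suc t)"
begin

definition col where "col t = fst (vs ! t)"
definition row where "row t = snd (vs ! t)"
definition V where "V t \<longleftrightarrow> col t = col (Suc t)"
definition F where "F t \<longleftrightarrow> M (col t) (row t) = Dec"
definition dx where "dx t = dxf V F t"
definition dy where "dy t = (dx t \<noteq> F t)"
definition mm where "mm = 3 * k"
definition P :: "(nat \<times> nat) set" where "P = {0..<k} \<times> {0..<mm}"
definition N where "N = k * mm"
definition keyx :: "nat \<times> nat \<Rightarrow> nat \<times> nat \<times> nat \<times> nat" where
  "keyx p = (col (fst p), uxf V (fst p), lam mm (dx (fst p)) (snd p), fst p)"
definition keyy :: "nat \<times> nat \<Rightarrow> nat \<times> nat \<times> nat \<times> nat" where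
  "keyy p = (row (fst p), uyf V (fst p), lam mm (dy (fst p)) (snd p), fst p)"
definition rx where "rx = rk keyx P"
definition ry where "ry = rk keyy P"
definition sig where "sig i = ry (inv_into P rx i)"

lemma vert: "t < k \<Longrightarrow> cg_vertex M kc lr (vs ! t)"
  using verts len by auto

lemma col_lt: "t < k \<Longrightarrow> col t < kc" using vert unfolding cg_vertex_def col_def by auto
lemma row_lt: "t < k \<Longrightarrow> row t < lr" using vert unfolding cg_vertex_def row_def by auto
lemma notEmp: "t < k \<Longrightarrow> M (col t) (row t) \<noteq> Emp" using vert unfolding cg_vertex_def col_def row_def by auto

lemma vs_eq: "t < k \<Longrightarrow> vs ! t = (col t, row t)" unfolding col_def row_def by simp

lemma cell_uniq: assumes "t < k" "t' < k" "col t = col t'" "row t = row t'" shows "t = t'"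
proof -
  have "vs ! t = vs ! t'" using vs_eq[OF assms(1)] vs_eq[OF assms(2)] assms(3,4) by simp
  then show ?thesis using nth_eq_iff_index_eq[OF dist] assms(1,2) len by simp
qed

lemma horiz: assumes "Suc t < k" "\<not> V t" shows "row t = row (Suc t)"
proof -
  have "cg_adj M kc lr (vs!t) (vs!Suc t)" using adj assms(1) by blast
  then have "fst (vs!t) = fst (vs!Suc t) \<or> snd (vs!t) = snd (vs!Suc t)"
    unfolding cg_adj_def by blast
  then show ?thesis using assms(2) unfolding V_def col_def row_def by blast
qed

lemma dy_horiz: "\<not> V t \<Longrightarrow> dy (Suc t) = dy t"
  unfolding dy_def dx_def by auto

lemma dx_vert: "V t \<Longrightarrow> dx (Suc t) = dx t"
  unfolding dx_def by auto

lemma col_ux: "t < k \<Longrightarrow> col (uxf V t) = col t"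
  by (induction t) (auto simp: V_def)

lemma row_uy: "t < k \<Longrightarrow> row (uyf V t) = row t"
proof (induction t)
  case 0 then show ?case by simp
next
  case (Suc t) then show ?case using horiz[of t] by auto
qed

lemma finP: "finite P" unfolding P_def by simp
lemma cardP: "card P = N" unfolding P_def N_def by simp

lemma injx: "inj_on keyx P"
proof (rule inj_onI)
  fix p q assume p: "p \<in> P" and q: "q \<in> P" and e: "keyx p = keyx q"
  obtain t h where pe: "p = (t,h)" by (cases p)
  obtain t' h' where qe: "q = (t',h')" by (cases q)
  have tt: "t = t'" using e unfolding pe qe keyx_def by simp
  have l: "lam mm (dx t) h = lam mm (dx t) h'" using e unfolding pe qe keyx_def tt by simp
  have "h < mm" "h' < mm" using p q unfolding pe qe P_def by auto
  then have "h = h'" using lam_inj l by blast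
  then show "p = q" using pe qe tt by simp
qed
lemma injy: "inj_on keyy P"
proof (rule inj_onI)
  fix p q assume p: "p \<in> P" and q: "q \<in> P" and e: "keyy p = keyy q"
  obtain t h where pe: "p = (t,h)" by (cases p)
  obtain t' h' where qe: "q = (t',h')" by (cases q)
  have tt: "t = t'" using e unfolding pe qe keyy_def by simp
  have l: "lam mm (dy t) h = lam mm (dy t) h'" using e unfolding pe qe keyy_def tt by simp
  have "h < mm" "h' < mm" using p q unfolding pe qe P_def by auto
  then have "h = h'" using lam_inj l by blast
  then show "p = q" using pe qe tt by simp
qed

lemma bijx: "bij_betw rx P {1..N}" unfolding rx_def using rk_bij[OF finP injx] cardP by simp
lemma bijy: "bij_betw ry P {1..N}" unfolding ry_def using rk_bij[OF finP injy] cardP by simp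

lemma rx_less: "p \<in> P \<Longrightarrow> q \<in> P \<Longrightarrow> rx p < rx q \<longleftrightarrow> keyx p < keyx q"
  unfolding rx_def by (rule rk_less_iff[OF finP injx])
lemma ry_less: "p \<in> P \<Longrightarrow> q \<in> P \<Longrightarrow> ry p < ry q \<longleftrightarrow> keyy p < keyy q"
  unfolding ry_def by (rule rk_less_iff[OF finP injy])

lemma sig_bij: "bij_betw sig {1..N} {1..N}"
proof -
  have "bij_betw (inv_into P rx) {1..N} P" using bijx by (rule bij_betw_inv_into)
  then have "bij_betw (ry \<circ> inv_into P rx) {1..N} {1..N}" using bijy by (rule bij_betw_trans)
  then show ?thesis unfolding sig_def comp_def .
qed

lemma diag: "diagram N sig = (\<lambda>p. (rx p, ry p)) ` P"
proof -
  have im: "rx ` P = {1..N}" using bijx by (rule bij_betw_imp_surj_on)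
  have inj: "inj_on rx P" using bijx by (rule bij_betw_imp_inj_on)
  have "diagram N sig = (\<lambda>i. (i, sig i)) ` rx ` P" unfolding diagram_def im ..
  also have "\<dots> = (\<lambda>p. (rx p, ry p)) ` P"
    unfolding image_image sig_def using inv_into_f_f[OF inj] by (intro image_cong) auto
  finally show ?thesis .
qed

end



context pathctx
begin

definition Ix where "Ix c = {Suc (card {p\<in>P. col (fst p) < c}) .. card {p\<in>P. col (fst p) \<le> c}}"
definition Jy where "Jy c = {Suc (card {p\<in>P. row (fst p) < c}) .. card {p\<in>P. row (fst p) \<le> c}}"

lemma monox: "\<forall>p\<in>P. \<forall>q\<in>P. keyx p < keyx q \<longrightarrow> col (fst p) \<le> col (fst q)"
proof (intro ballI impI)
  fix p q assume "keyx p < keyx q"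
  then show "col (fst p) \<le> col (fst q)" unfolding keyx_def by (rule prefix1)
qed

lemma monoy: "\<forall>p\<in>P. \<forall>q\<in>P. keyy p < keyy q \<longrightarrow> row (fst p) \<le> row (fst q)"
proof (intro ballI impI)
  fix p q assume "keyy p < keyy q"
  then show "row (fst p) \<le> row (fst q)" unfolding keyy_def by (rule prefix1)
qed

lemma rx_in: assumes "p \<in> P" shows "rx p \<in> Ix (col (fst p))"
  using rk_prefix[OF finP injx assms monox] unfolding rx_def Ix_def by (simp add: Suc_le_eq)
lemma ry_in: assumes "p \<in> P" shows "ry p \<in> Jy (row (fst p))"
  using rk_prefix[OF finP injy assms monoy] unfolding ry_def Jy_def by (simp add: Suc_le_eq)

lemma rx_in_iff: "p \<in> P \<Longrightarrow> rx p \<in> Ix c \<longleftrightarrow> col (fst p) = c"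
  using rx_in rk_in_block[OF finP injx _ monox] unfolding rx_def Ix_def by blast
lemma ry_in_iff: "p \<in> P \<Longrightarrow> ry p \<in> Jy c \<longleftrightarrow> row (fst p) = c"
  using ry_in rk_in_block[OF finP injy _ monoy] unfolding ry_def Jy_def by blast

lemma P_fst: "p \<in> P \<Longrightarrow> fst p < k" unfolding P_def by auto
lemma P_snd: "p \<in> P \<Longrightarrow> snd p < mm" unfolding P_def by auto

lemma ip_x: "interval_partition N kc Ix"
  unfolding interval_partition_def
proof (intro conjI allI impI ballI)
  fix i assume "i < kc" show "is_int (Ix i)" unfolding is_int_def Ix_def by blast
next
  fix i j x y assume ij: "i < j \<and> j < kc" and x: "x \<in> Ix i" and y: "y \<in> Ix j"
  have "card {p\<in>P. col (fst p) \<le> i} \<le> card {p\<in>P. col (fst p) < j}"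
    using ij finP by (intro card_mono) auto
  then show "x < y" using x y unfolding Ix_def by auto
next
  show "(\<Union>i<kc. Ix i) = {1..N}"
  proof
    show "(\<Union>i<kc. Ix i) \<subseteq> {1..N}"
    proof
      fix x assume "x \<in> (\<Union>i<kc. Ix i)"
      then obtain i where x: "x \<in> Ix i" by blast
      have "card {p\<in>P. col (fst p) \<le> i} \<le> card P" using finP by (intro card_mono) auto
      then show "x \<in> {1..N}" using x cardP unfolding Ix_def by auto
    qed
    show "{1..N} \<subseteq> (\<Union>i<kc. Ix i)"
    proof
      fix x assume "x \<in> {1..N}"
      then obtain p where p: "p \<in> P" "x = rx p" using bij_betw_imp_surj_on[OF bijx] by blast
      have "col (fst p) < kc" using col_lt P_fst p(1) by blast
      then show "x \<in> (\<Union>i<kc. Ix i)" using rx_in[OF p(1)] p(2) by blast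
    qed
  qed
qed

lemma ip_y: "interval_partition N lr Jy"
  unfolding interval_partition_def
proof (intro conjI allI impI ballI)
  fix i assume "i < lr" show "is_int (Jy i)" unfolding is_int_def Jy_def by blast
next
  fix i j x y assume ij: "i < j \<and> j < lr" and x: "x \<in> Jy i" and y: "y \<in> Jy j"
  have "card {p\<in>P. row (fst p) \<le> i} \<le> card {p\<in>P. row (fst p) < j}"
    using ij finP by (intro card_mono) auto
  then show "x < y" using x y unfolding Jy_def by auto
next
  show "(\<Union>i<lr. Jy i) = {1..N}"
  proof
    show "(\<Union>i<lr. Jy i) \<subseteq> {1..N}"
    proof
      fix x assume "x \<in> (\<Union>i<lr. Jy i)"
      then obtain i where x: "x \<in> Jy i" by blast
      have "card {p\<in>P. row (fst p) \<le> i} \<le> card P" using finP by (intro card_mono) auto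
      then show "x \<in> {1..N}" using x cardP unfolding Jy_def by auto
    qed
    show "{1..N} \<subseteq> (\<Union>i<lr. Jy i)"
    proof
      fix x assume "x \<in> {1..N}"
      then obtain p where p: "p \<in> P" "x = ry p" using bij_betw_imp_surj_on[OF bijy] by blast
      have "row (fst p) < lr" using row_lt P_fst p(1) by blast
      then show "x \<in> (\<Union>i<lr. Jy i)" using ry_in[OF p(1)] p(2) by blast
    qed
  qed
qed

lemma cellset: "diagram N sig \<inter> (Ix i \<times> Jy j) =
   (\<lambda>p. (rx p, ry p)) ` {p\<in>P. col (fst p) = i \<and> row (fst p) = j}"
  unfolding diag using rx_in_iff ry_in_iff by auto

lemma same_cell:
  assumes "p \<in> P" "q \<in> P" "col (fst p) = col (fst q)" "row (fst p) = row (fst q)"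
  shows "fst p = fst q"
  using cell_uniq[OF P_fst[OF assms(1)] P_fst[OF assms(2)] assms(3,4)] .

lemma cells_ok: "i < kc \<Longrightarrow> j < lr \<Longrightarrow> cell_ok (M i j) (diagram N sig \<inter> (Ix i \<times> Jy j))"
proof -
  assume ij: "i < kc" "j < lr"
  let ?C = "{p\<in>P. col (fst p) = i \<and> row (fst p) = j}"
  have key: "\<And>p q. p \<in> ?C \<Longrightarrow> q \<in> ?C \<Longrightarrow> rx p < rx q \<Longrightarrow>
      (M i j = Inc \<longrightarrow> ry p < ry q) \<and> (M i j = Dec \<longrightarrow> ry q < ry p)"
  proof -
    fix p q assume p: "p \<in> ?C" and q: "q \<in> ?C" and lt: "rx p < rx q"
    obtain t h where pe: "p = (t,h)" by (cases p)
    obtain t' h' where qe: "q = (t',h')" by (cases q)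
    have pP: "p \<in> P" and qP: "q \<in> P" using p q by auto
    have tt: "t' = t" using same_cell[OF qP pP] p q unfolding pe qe by auto
    have hm: "h < mm" "h' < mm" using pP qP unfolding pe qe P_def by auto
    have ci: "col t = i" "row t = j" using p unfolding pe by auto
    have "keyx p < keyx q" using lt rx_less[OF pP qP] by simp
    then have l1: "lam mm (dx t) h < lam mm (dx t) h'" unfolding pe qe tt keyx_def by simp
    show "(M i j = Inc \<longrightarrow> ry p < ry q) \<and> (M i j = Dec \<longrightarrow> ry q < ry p)"
    proof (intro conjI impI)
      assume "M i j = Inc"
      then have "dy t = dx t" unfolding dy_def F_def using ci by simp
      then have "keyy p < keyy q" using l1 unfolding pe qe tt keyy_def by simp
      then show "ry p < ry q" using ry_less[OF pP qP] by simp
    next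
      assume "M i j = Dec"
      then have d: "dy t = (\<not> dx t)" unfolding dy_def F_def using ci by simp
      have "lam mm (dy t) h' < lam mm (dy t) h"
        using l1 lam_less[OF hm(1) hm(2)] lam_less[OF hm(2) hm(1)] d by (auto split: if_splits)
      then have "keyy q < keyy p" unfolding pe qe tt keyy_def by simp
      then show "ry q < ry p" using ry_less[OF qP pP] by simp
    qed
  qed
  show ?thesis
  proof (cases "M i j")
    case Inc
    show ?thesis unfolding cell_ok_def Inc cellset using key Inc by auto
  next
    case Dec
    show ?thesis unfolding cell_ok_def Dec cellset using key Dec by fastforce
  next
    case Emp
    have "?C = {}"
    proof (rule ccontr)
      assume "?C \<noteq> {}"
      then obtain p where p: "p \<in> ?C" by blast
      then have "M (col (fst p)) (row (fst p)) \<noteq> Emp" using notEmp P_fst by blast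
      then show False using p Emp by auto
    qed
    then show ?thesis unfolding cell_ok_def Emp cellset by simp
  qed
qed

lemma in_Grid: "(N, sig) \<in> Grid M kc lr"
  unfolding Grid_def is_perm_def gridding_def
  using sig_bij ip_x ip_y cells_ok by blast

end



context pathctx
begin

definition rka :: "bool \<Rightarrow> nat \<times> nat \<Rightarrow> nat" where "rka a = (if a then rx else ry)"
definition ua :: "bool \<Rightarrow> nat \<Rightarrow> nat" where "ua a t = (if a then uxf V t else uyf V t)"
definition ga :: "bool \<Rightarrow> nat \<times> nat \<Rightarrow> nat \<times> nat" where
  "ga a p = (if a then (col (fst p), uxf V (fst p)) else (row (fst p), uyf V (fst p)))"

lemma bija: "bij_betw (rka a) P {1..N}"
  unfolding rka_def using bijx bijy by simp

lemma inja: "inj_on (rka a) P" using bija by (rule bij_betw_imp_inj_on)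
lemma surja: "rka a ` P = {1..N}" using bija by (rule bij_betw_imp_surj_on)

lemma mono_ga_x: "\<forall>p\<in>P. \<forall>q\<in>P. keyx p < keyx q \<longrightarrow> ga True p \<le> ga True q"
proof (intro ballI impI)
  fix p q assume "keyx p < keyx q"
  then have "(col (fst p), uxf V (fst p)) \<le> (col (fst q), uxf V (fst q))"
    unfolding keyx_def by (rule prefix2)
  then show "ga True p \<le> ga True q" unfolding ga_def by simp
qed
lemma mono_ga_y: "\<forall>p\<in>P. \<forall>q\<in>P. keyy p < keyy q \<longrightarrow> ga False p \<le> ga False q"
proof (intro ballI impI)
  fix p q assume "keyy p < keyy q"
  then have "(row (fst p), uyf V (fst p)) \<le> (row (fst q), uyf V (fst q))"
    unfolding keyy_def by (rule prefix2)
  then show "ga False p \<le> ga False q" unfolding ga_def by simp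
qed

lemma contig:
  assumes "p \<in> P" "q \<in> P" "r \<in> P" "ga a p = ga a q" "rka a p \<le> rka a r" "rka a r \<le> rka a q"
  shows "ga a r = ga a p"
proof (cases a)
  case True
  then show ?thesis using rk_contig[OF finP injx assms(1-3) mono_ga_x] assms(4-6)
    unfolding rka_def rx_def by simp
next
  case False
  then show ?thesis using rk_contig[OF finP injy assms(1-3) mono_ga_y] assms(4-6)
    unfolding rka_def ry_def by simp
qed

lemma adja:
  assumes t: "Suc t < k" and h: "h < mm"
  shows "rka (V t) (Suc t, h) = Suc (rka (V t) (t, h))"
proof (cases "V t")
  case True
  have e: "keyx (Suc t, h) = (col t, uxf V t, lam mm (dx t) h, Suc t)"
    unfolding keyx_def using True dx_vert[OF True] by (simp add: V_def)
  have e2: "keyx (t, h) = (col t, uxf V t, lam mm (dx t) h, t)" unfolding keyx_def by simp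
  have inP: "(t,h) \<in> P" "(Suc t, h) \<in> P" using t h unfolding P_def by auto
  have "rk keyx P (Suc t, h) = Suc (rk keyx P (t,h))"
  proof (rule rk_succ[OF finP injx inP])
    show "keyx (t, h) < keyx (Suc t, h)" unfolding e e2 by simp
    show "\<forall>r\<in>P. \<not> (keyx (t, h) < keyx r \<and> keyx r < keyx (Suc t, h))"
      unfolding e e2 using between4 by blast
  qed
  then show ?thesis using True unfolding rka_def rx_def by simp
next
  case False
  have e: "keyy (Suc t, h) = (row t, uyf V t, lam mm (dy t) h, Suc t)"
    unfolding keyy_def using False dy_horiz[OF False] horiz[OF t False] by simp
  have e2: "keyy (t, h) = (row t, uyf V t, lam mm (dy t) h, t)" unfolding keyy_def by simp
  have inP: "(t,h) \<in> P" "(Suc t, h) \<in> P" using t h unfolding P_def by auto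
  have "rk keyy P (Suc t, h) = Suc (rk keyy P (t,h))"
  proof (rule rk_succ[OF finP injy inP])
    show "keyy (t, h) < keyy (Suc t, h)" unfolding e e2 by simp
    show "\<forall>r\<in>P. \<not> (keyy (t, h) < keyy r \<and> keyy r < keyy (Suc t, h))"
      unfolding e e2 using between4 by blast
  qed
  then show ?thesis using False unfolding rka_def ry_def by simp
qed

lemma ua_self: "ua (uxf V t = t) t = t"
  unfolding ua_def using ux_or_uy[of V t] by auto

lemma ga_ua: "ga a p = ga a q \<Longrightarrow> ua a (fst p) = ua a (fst q)"
  unfolding ga_def ua_def by (auto split: if_splits)

lemma ga_h: "ga a (t, h) = ga a (t, h')"
  unfolding ga_def by simp

section \<open>Boundaries\<close>

definition Bd :: "(nat \<times> nat) set \<Rightarrow> bool \<Rightarrow> nat set" where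
  "Bd S' a = {i. (i \<in> rka a ` S') \<noteq> (Suc i \<in> rka a ` S')}"

definition Bset :: "(nat \<times> nat) set \<Rightarrow> (bool \<times> nat) set" where
  "Bset S' = Pair True ` Bd S' True \<union> Pair False ` Bd S' False"

lemma Bd_fin: assumes "S' \<subseteq> P" shows "finite (Bd S' a)"
proof -
  have "rka a ` S' \<subseteq> {1..N}" using surja assms by blast
  then have "Bd S' a \<subseteq> {..N}" unfolding Bd_def by auto
  then show ?thesis by (rule finite_subset) simp
qed

lemma Bset_card: assumes "S' \<subseteq> P" shows "card (Bset S') = card (Bd S' True) + card (Bd S' False)"
proof -
  have "card (Bset S') = card (Pair True ` Bd S' True) + card (Pair False ` Bd S' False)"
    unfolding Bset_def using Bd_fin[OF assms] by (intro card_Un_disjoint) auto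
  also have "\<dots> = card (Bd S' True) + card (Bd S' False)"
    by (simp add: card_image inj_on_def)
  finally show ?thesis .
qed

lemma mem_img: assumes "S' \<subseteq> P" "p \<in> P" shows "rka a p \<in> rka a ` S' \<longleftrightarrow> p \<in> S'"
  using inja[of a] assms by (auto dest: inj_onD)

lemma bd_adj:
  assumes S: "S' \<subseteq> P" and p: "p \<in> P" and q: "q \<in> P" and s: "rka a q = Suc (rka a p)"
    and d: "(p \<in> S') \<noteq> (q \<in> S')"
  shows "(a, rka a p) \<in> Bset S'"
proof -
  have 1: "rka a p \<in> rka a ` S' \<longleftrightarrow> p \<in> S'" by (rule mem_img[OF S p])
  have 2: "Suc (rka a p) \<in> rka a ` S' \<longleftrightarrow> q \<in> S'" using mem_img[OF S q, of a] s by simp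
  have "rka a p \<in> Bd S' a" unfolding Bd_def using 1 2 d by simp
  then show ?thesis unfolding Bset_def by (cases a) auto
qed

definition ownr :: "bool \<times> nat \<Rightarrow> nat" where
  "ownr b = ua (fst b) (fst (inv_into P (rka (fst b)) (snd b)))"
definition ownh :: "bool \<times> nat \<Rightarrow> nat" where
  "ownh b = snd (inv_into P (rka (fst b)) (snd b))"

lemma inv_rka: "p \<in> P \<Longrightarrow> inv_into P (rka a) (rka a p) = p"
  using inja by (rule inv_into_f_f)

lemma row_bd:
  assumes S: "S' \<subseteq> P" and t: "t < k" and h1: "h1 < mm" "(t,h1) \<in> S'" and h2: "h2 < mm" "(t,h2) \<notin> S'"
  shows "t \<in> ownr ` Bset S'"
proof -
  define a where "a = (uxf V t = t)"
  have uat: "ua a t = t" unfolding a_def by (rule ua_self)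
  have P1: "(t,h1) \<in> P" and P2: "(t,h2) \<in> P" using t h1 h2 unfolding P_def by auto
  define f where "f i = (inv_into P (rka a) i \<in> S')" for i
  have key: "\<exists>b\<in>Bset S'. ownr b = t"
    if pa: "pa \<in> P" "qa \<in> P" "ga a pa = ga a qa" "ua a (fst pa) = t" "rka a pa \<le> rka a qa"
      "f (rka a pa) \<noteq> f (rka a qa)" for pa qa
  proof -
    obtain i where i: "rka a pa \<le> i" "i < rka a qa" "f i \<noteq> f (Suc i)"
      using ivt_bool[OF pa(5) pa(6)] by blast
    have r1: "rka a pa \<in> {1..N}" "rka a qa \<in> {1..N}" using surja pa(1,2) by blast+
    have "i \<in> {1..N}" "Suc i \<in> {1..N}" using i(1,2) r1 by auto
    then have ii: "i \<in> rka a ` P" "Suc i \<in> rka a ` P" using surja[of a] by simp_all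
    obtain u where u0: "i = rka a u" "u \<in> P" using ii(1) by (rule imageE)
    obtain w where w0: "Suc i = rka a w" "w \<in> P" using ii(2) by (rule imageE)
    have u: "u \<in> P" "rka a u = i" using u0 by simp_all
    have w: "w \<in> P" "rka a w = Suc i" using w0 by simp_all
    have "rka a pa \<le> rka a u" "rka a u \<le> rka a qa" using u(2) i(1,2) by simp_all
    then have gu: "ga a u = ga a pa" by (rule contig[OF pa(1) pa(2) u(1) pa(3)])
    have iu: "inv_into P (rka a) i = u" using inv_rka[OF u(1), of a] u(2) by simp
    have iw: "inv_into P (rka a) (Suc i) = w" using inv_rka[OF w(1), of a] w(2) by simp
    have fu: "f i = (u \<in> S')" "f (Suc i) = (w \<in> S')"
      unfolding f_def iu iw by simp_all
    have e1: "rka a w = Suc (rka a u)" using u(2) w(2) by simp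
    have e2: "(u \<in> S') \<noteq> (w \<in> S')" using i(3) fu by simp
    have "(a, rka a u) \<in> Bset S'" by (rule bd_adj[OF S u(1) w(1) e1 e2])
    then have b: "(a, i) \<in> Bset S'" using u(2) by simp
    have "ownr (a, i) = ua a (fst u)" unfolding ownr_def using iu by simp
    also have "\<dots> = t" using ga_ua[OF gu] pa(4) by simp
    finally show ?thesis using b by blast
  qed
  have g12: "ga a (t,h1) = ga a (t,h2)" by (rule ga_h)
  have f1: "f (rka a (t,h1)) = True" "f (rka a (t,h2)) = False"
    unfolding f_def using inv_rka P1 P2 h1 h2 by auto
  have "rka a (t,h1) \<le> rka a (t,h2) \<or> rka a (t,h2) \<le> rka a (t,h1)" by linarith
  have u1: "ua a (fst (t,h1)) = t" "ua a (fst (t,h2)) = t" using uat by simp_all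
  have ff: "f (rka a (t,h1)) \<noteq> f (rka a (t,h2))" "f (rka a (t,h2)) \<noteq> f (rka a (t,h1))"
    using f1 by simp_all
  from this(1) have "\<exists>b\<in>Bset S'. ownr b = t"
  proof (cases "rka a (t,h1) \<le> rka a (t,h2)")
    case True
    show ?thesis by (rule key[OF P1 P2 g12 u1(1) True ff(1)])
  next
    case False
    then have le: "rka a (t,h2) \<le> rka a (t,h1)" by simp
    show ?thesis by (rule key[OF P2 P1 g12[symmetric] u1(2) le ff(2)])
  qed
  then obtain b where b: "b \<in> Bset S'" "ownr b = t" by blast
  from b(2)[symmetric] b(1) show ?thesis by (rule image_eqI)
qed

lemma thread_bd:
  assumes S: "S' \<subseteq> P" and h: "h < mm" and t1: "t1 < k" "(t1,h) \<in> S'" and t2: "t2 < k" "(t2,h) \<notin> S'"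
  shows "h \<in> ownh ` Bset S'"
proof -
  define f where "f t = ((t,h) \<in> S')" for t
  have key: "\<exists>b\<in>Bset S'. ownh b = h" if h12: "a1 \<le> a2" "a2 < k" "f a1 \<noteq> f a2" for a1 a2
  proof -
    obtain t where tt: "a1 \<le> t" "t < a2" "f t \<noteq> f (Suc t)" using ivt_bool[of a1 a2 f, OF h12(1) h12(3)] by blast
    have st: "Suc t < k" using tt h12 by simp
    have inP: "(t,h) \<in> P" "(Suc t, h) \<in> P" using st h unfolding P_def by auto
    have d: "((t,h) \<in> S') \<noteq> ((Suc t,h) \<in> S')" using tt(3) unfolding f_def .
    have b: "(V t, rka (V t) (t,h)) \<in> Bset S'"
      by (rule bd_adj[OF S inP adja[OF st h] d])
    have "ownh (V t, rka (V t) (t,h)) = h" unfolding ownh_def using inv_rka[OF inP(1)] by simp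
    then show ?thesis using b by blast
  qed
  have ff: "f t1 \<noteq> f t2" "f t2 \<noteq> f t1" using t1 t2 unfolding f_def by simp_all
  have "\<exists>b\<in>Bset S'. ownh b = h"
  proof (cases "t1 \<le> t2")
    case True
    show ?thesis by (rule key[OF True t2(1) ff(1)])
  next
    case False
    then have le: "t2 \<le> t1" by simp
    show ?thesis by (rule key[OF le t1(1) ff(2)])
  qed
  then obtain b where b: "b \<in> Bset S'" "ownh b = h" by blast
  from b(2)[symmetric] b(1) show ?thesis by (rule image_eqI)
qed

end



context pathctx
begin

lemma D_inj: "inj_on (\<lambda>p. (rx p, ry p)) P"
  using bij_betw_imp_inj_on[OF bijx] unfolding inj_on_def by auto

lemma NN: "N = 3 * (k * k)" unfolding N_def mm_def by simp

lemma main_count: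
  assumes k1: "1 \<le> k" and S'P: "S' \<subseteq> P" and lo: "N \<le> 3 * card S'" and hi: "3 * card S' \<le> 2 * N"
  shows "k \<le> card (Bset S')"
proof -
  have finB: "finite (Bset S')" unfolding Bset_def using Bd_fin[OF S'P] by simp
  show ?thesis
  proof (cases "\<forall>t<k. (\<exists>h<mm. (t,h) \<in> S') \<and> (\<exists>h<mm. (t,h) \<notin> S')")
    case True
    have sub: "{0..<k} \<subseteq> ownr ` Bset S'"
    proof
      fix t assume "t \<in> {0..<k}"
      then have t: "t < k" by simp
      then obtain h1 h2 where "h1 < mm" "(t,h1) \<in> S'" "h2 < mm" "(t,h2) \<notin> S'" using True by blast
      then show "t \<in> ownr ` Bset S'" using row_bd[OF S'P t] by blast
    qed
    have "k = card {0..<k}" by simp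
    also have "\<dots> \<le> card (ownr ` Bset S')" using finB sub by (intro card_mono) auto
    also have "\<dots> \<le> card (Bset S')" by (rule card_image_le[OF finB])
    finally show ?thesis .
  next
    case False
    then obtain t0 where t0: "t0 < k" "(\<forall>h<mm. (t0,h) \<in> S') \<or> (\<forall>h<mm. (t0,h) \<notin> S')" by blast
    define H where "H = {h. h < mm \<and> (\<exists>t<k. ((t,h) \<in> S') \<noteq> ((t0,h) \<in> S'))}"
    have sub: "H \<subseteq> ownh ` Bset S'"
    proof
      fix h assume "h \<in> H"
      then obtain t where h: "h < mm" and t: "t < k" "((t,h) \<in> S') \<noteq> ((t0,h) \<in> S')"
        unfolding H_def by blast
      show "h \<in> ownh ` Bset S'"
      proof (cases "(t0,h) \<in> S'")
        case True then show ?thesis using thread_bd[OF S'P h t0(1) True t(1)] t(2) by simp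
      next
        case False then show ?thesis using thread_bd[OF S'P h t(1) _ t0(1) False] t(2) by simp
      qed
    qed
    have finH: "finite H" unfolding H_def by simp
    have kk: "k * k \<le> k * card H"
    proof (cases "\<forall>h<mm. (t0,h) \<in> S'")
      case True
      have "P - S' \<subseteq> {0..<k} \<times> H" unfolding H_def P_def using True by auto
      then have "card (P - S') \<le> card ({0..<k} \<times> H)" using finH by (intro card_mono) auto
      also have "\<dots> = k * card H" by (simp add: card_cartesian_product)
      finally have a: "card (P - S') \<le> k * card H" .
      have "card (P - S') = card P - card S'" using S'P finP by (simp add: card_Diff_subset finite_subset)
      then have "k * k \<le> card (P - S')" using hi cardP NN by simp
      then show ?thesis using a by (rule order.trans)
    next
      case False
      then have F: "\<forall>h<mm. (t0,h) \<notin> S'" using t0(2) by blast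
      have "S' \<subseteq> {0..<k} \<times> H"
      proof
        fix p assume p: "p \<in> S'"
        obtain a b where ab: "p = (a,b)" by (cases p)
        have ak: "a < k" "b < mm" using p S'P ab unfolding P_def by auto
        have "(t0,b) \<notin> S'" using F ak(2) by blast
        then have "b \<in> H" unfolding H_def using ak p ab by blast
        then show "p \<in> {0..<k} \<times> H" using ab ak by simp
      qed
      then have "card S' \<le> card ({0..<k} \<times> H)" using finH by (intro card_mono) auto
      also have "\<dots> = k * card H" by (simp add: card_cartesian_product)
      finally have a: "card S' \<le> k * card H" .
      have "k * k \<le> card S'" using lo NN by simp
      then show ?thesis using a by (rule order.trans)
    qed
    then have "k \<le> card H" using k1 by simp
    also have "\<dots> \<le> card (ownh ` Bset S')" using sub by (intro card_mono) (auto simp: finB)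
    also have "\<dots> \<le> card (Bset S')" by (rule card_image_le[OF finB])
    finally show ?thesis .
  qed
qed

lemma bound:
  assumes k1: "1 \<le> k" and T: "is_grid_tree N sig T"
  shows "k \<le> 4 * tree_grid_width T"
proof -
  define D where "D = (\<lambda>p::nat\<times>nat. (rx p, ry p))"
  have dist: "distinct (leaves T)" and sl: "set (leaves T) = D ` P"
    using T unfolding is_grid_tree_def diag D_def by auto
  have Dinj: "inj_on D P" unfolding D_def by (rule D_inj)
  have lenN: "length (leaves T) = N"
    using distinct_card[OF dist] sl card_image[OF Dinj] cardP by simp
  have "3 \<le> 3 * (k * k)" using k1 by simp
  then have N3: "3 \<le> N" using NN by simp
  obtain S where S: "S \<in> below_sets T" "N \<le> 3 * card S" "3 * card S \<le> 2 * N"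
    using sep[OF dist, of N] lenN N3 by auto
  have Ssub: "S \<subseteq> D ` P" using below_sub[OF S(1)] sl by simp
  define S' where "S' = {p \<in> P. D p \<in> S}"
  have S'P: "S' \<subseteq> P" unfolding S'_def by auto
  have SS: "S = D ` S'" using Ssub unfolding S'_def by auto
  have cS: "card S = card S'" unfolding SS using inj_on_subset[OF Dinj S'P] by (rule card_image)
  have fstS: "fst ` S = rka True ` S'" unfolding SS D_def rka_def by (simp add: image_image)
  have sndS: "snd ` S = rka False ` S'" unfolding SS D_def rka_def by (simp add: image_image)
  have finS': "finite S'" using S'P finP by (rule finite_subset)
  have gc: "grid_complexity S \<le> tree_grid_width T"
    unfolding tree_grid_width_def using below_fin S(1) by (intro Max_ge) auto
  have bx: "card (Bd S' True) \<le> 2 * intervalicity (fst ` S)"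
    unfolding fstS Bd_def using finS' by (intro bd_le) simp
  have by': "card (Bd S' False) \<le> 2 * intervalicity (snd ` S)"
    unfolding sndS Bd_def using finS' by (intro bd_le) simp
  have "k \<le> card (Bset S')" using main_count[OF k1 S'P] S(2,3) cS by simp
  also have "\<dots> = card (Bd S' True) + card (Bd S' False)" by (rule Bset_card[OF S'P])
  also have "\<dots> \<le> 2 * intervalicity (fst ` S) + 2 * intervalicity (snd ` S)" using bx by' by simp
  also have "\<dots> \<le> 4 * grid_complexity S" unfolding grid_complexity_def by simp
  also have "\<dots> \<le> 4 * tree_grid_width T" using gc by simp
  finally show ?thesis .
qed

lemma tree_exists:
  assumes k1: "1 \<le> k"
  shows "\<exists>T. is_grid_tree N sig T"
proof -
  have fin: "finite (diagram N sig)" unfolding diag using finP by simp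
  obtain xs where xs: "set xs = diagram N sig" "distinct xs" using finite_distinct_list[OF fin] by blast
  have "(0,0) \<in> P" unfolding P_def mm_def using k1 by auto
  then have "diagram N sig \<noteq> {}" unfolding diag by blast
  then have "xs \<noteq> []" using xs(1) by auto
  then have "leaves (mk xs) = xs" by (rule mk_leaves)
  then show ?thesis unfolding is_grid_tree_def using xs by (intro exI[of _ "mk xs"]) simp
qed

lemma width:
  assumes k1: "1 \<le> k"
  shows "k \<le> 4 * grid_width N sig"
proof -
  let ?X = "{tree_grid_width T | T. is_grid_tree N sig T}"
  have "?X \<noteq> {}" using tree_exists[OF k1] by blast
  then have "Inf ?X \<in> ?X" by (rule Inf_nat_def1)
  then obtain T where T: "is_grid_tree N sig T" "grid_width N sig = tree_grid_width T"
    unfolding grid_width_def by blast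
  show ?thesis using bound[OF k1 T(1)] T(2) by simp
qed

end

theorem mainTheorem4:
  fixes M :: "nat \<Rightarrow> nat \<Rightarrow> cellclass" and kc lr k :: nat
  assumes "has_path M kc lr k"
  shows "\<exists>n \<sigma>. (n, \<sigma>) \<in> Grid M kc lr \<and> real (grid_width n \<sigma>) \<ge> real k / 4"
proof -
  obtain vs where vs: "length vs = k" "distinct vs" "\<forall>v\<in>set vs. cg_vertex M kc lr v"
    "\<forall>t. Suc t < k \<longrightarrow> cg_adj M kc lr (vs ! t) (vs ! Suc t)"
    using assms unfolding has_path_def by blast
  interpret pathctx M kc lr k vs using vs by unfold_locales
  have g: "(N, sig) \<in> Grid M kc lr" by (rule in_Grid)
  have w: "real (grid_width N sig) \<ge> real k / 4"
  proof (cases "k = 0")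
    case True then show ?thesis by simp
  next
    case False
    then have "k \<le> 4 * grid_width N sig" using width by simp
    then show ?thesis by linarith
  qed
  show ?thesis using g w by blast
qed


end
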